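(* Let $F$ be a complete posheaf on a locale $X$. The following are equivalent: (1) $F$ is a complete Heyting sheaf, i.e. $sup_F\circ\mu_F=m_F\circ(1_F\times sup_F)$ as morphisms $F\times\mathbb{P}F\to F$. (2) Each $F(u)$, $u\in\mathcal{O}(X)$, is a complete Heyting algebra (frame), and for all $v\le u$ in $\mathcal{O}(X)$, $x\in F(u)$, $y\in F(v)$: $x\wedge l_{v,u}(y)=l_{v,u}(x|_v\wedge y)$, where $l_{v,u}:F(v)\to F(u)$ is the left adjoint of the restriction map $F(u)\to F(v)$.
   Context: Let $X$ be a locale with frame of opens $\mathcal{O}(X)$. A posheaf on $X$ is a sheaf of sets $F$ with (POS1) each $F(u)$ a poset; (POS2) restriction maps $F(u)\to F(v)$, $x\mapsto x|_v$ ($v\le u$), order-preserving; (POS3) if $u=\bigvee_i u_i$ and $s,t\in F(u)$ satisfy $s|_{u_i}\le t|_{u_i}$ for all $i$, then $s\le t$. A posheaf $F$ is complete iff every $F(u)$ is a complete lattice and every restriction map $F(u)\to F(v)$ ($v\le u$) is surjective and has both a left and a right adjoint (equivalently, the principal ideal embedding into the sheaf of downsheaves has a left adjoint, adjointness taken with respect to the order on points $x\in F(u)$, $y\in F(w)$: $x\le y$ iff $u\le w$ and $x\le y|_u$). $\mathbb{P}F$ is the sheaf with $\mathbb{P}F(u)$ the set of subsheaves of $F^u$ (the restriction of $F$ to $\downarrow u$), with restriction $S\mapsto S^v$. For complete $F$, $sup_F:\mathbb{P}F\to F$ sends $S\in\mathbb{P}F(u)$ to the least $z\in F(u)$ with $S(v)\subseteq\{y\in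 F(v)\mid y\le z|_v\}$ for all $v\le u$. $m_F:F\times F\to F$ is the componentwise binary meet $(x,y)\mapsto x\wedge y$ in $F(u)$ (the right adjoint of the diagonal). $\mu_F:F\times\mathbb{P}F\to\mathbb{P}F$ sends $(x,S)$, $x\in F(u)$, $S\in\mathbb{P}F(u)$, to the subsheaf of $F^u$ generated by the presheaf $v\mapsto\{x|_v\wedge y\mid y\in S(v)\}$, $v\le u$. *)

theory Defs
  imports Main
begin

(* The locale X is given by its frame of opens, a type 'o :: complete_lattice
   satisfying the frame distributive law (assumed in the theorem).
   A sheaf of sets F on X is given by its carriers  F :: 'o => 'a set,
   restriction maps  res u v :: 'a => 'a  (res u v x = x|_v, used for v <= u)
   and, for posheaves, the orders  le u  on F u. *)

definition ps_least :: "('a \<Rightarrow> 'a \<Rightarrow> bool) \<Rightarrow> 'a set \<Rightarrow> ('a \<Rightarrow> bool) \<Rightarrow> 'a" where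
  "ps_least le A P = (THE z. z \<in> A \<and> P z \<and> (\<forall>w\<in>A. P w \<longrightarrow> le z w))"

definition ps_partial_order :: "('a \<Rightarrow> 'a \<Rightarrow> bool) \<Rightarrow> 'a set \<Rightarrow> bool" where
  "ps_partial_order le A \<longleftrightarrow>
     (\<forall>x\<in>A. le x x) \<and>
     (\<forall>x\<in>A. \<forall>y\<in>A. le x y \<and> le y x \<longrightarrow> x = y) \<and>
     (\<forall>x\<in>A. \<forall>y\<in>A. \<forall>z\<in>A. le x y \<and> le y z \<longrightarrow> le x z)"

definition ps_is_lub :: "('a \<Rightarrow> 'a \<Rightarrow> bool) \<Rightarrow> 'a set \<Rightarrow> 'a set \<Rightarrow> 'a \<Rightarrow> bool" where
  "ps_is_lub le A S z \<longleftrightarrow> z \<in> A \<and> (\<forall>s\<in>S. le s z) \<and> (\<forall>w\<in>A. (\<forall>s\<in>S. le s w) \<longrightarrow> le z w)"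

definition ps_complete_lattice :: "('a \<Rightarrow> 'a \<Rightarrow> bool) \<Rightarrow> 'a set \<Rightarrow> bool" where
  "ps_complete_lattice le A \<longleftrightarrow> ps_partial_order le A \<and> (\<forall>S\<subseteq>A. \<exists>z. ps_is_lub le A S z)"

definition ps_join :: "('a \<Rightarrow> 'a \<Rightarrow> bool) \<Rightarrow> 'a set \<Rightarrow> 'a set \<Rightarrow> 'a" where
  "ps_join le A S = ps_least le A (\<lambda>z. \<forall>s\<in>S. le s z)"

definition ps_meet :: "('a \<Rightarrow> 'a \<Rightarrow> bool) \<Rightarrow> 'a set \<Rightarrow> 'a \<Rightarrow> 'a \<Rightarrow> 'a" where
  "ps_meet le A x y =
     (THE z. z \<in> A \<and> le z x \<and> le z y \<and> (\<forall>w\<in>A. le w x \<and> le w y \<longrightarrow> le w z))"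

definition ps_frame :: "('a \<Rightarrow> 'a \<Rightarrow> bool) \<Rightarrow> 'a set \<Rightarrow> bool" where
  "ps_frame le A \<longleftrightarrow> ps_complete_lattice le A \<and>
     (\<forall>x\<in>A. \<forall>S\<subseteq>A. ps_meet le A x (ps_join le A S) = ps_join le A {ps_meet le A x s | s. s \<in> S})"

definition is_presheaf :: "('o::complete_lattice \<Rightarrow> 'a set) \<Rightarrow> ('o \<Rightarrow> 'o \<Rightarrow> 'a \<Rightarrow> 'a) \<Rightarrow> bool" where
  "is_presheaf F res \<longleftrightarrow>
     (\<forall>u. \<forall>x\<in>F u. res u u x = x) \<and>
     (\<forall>u v. v \<le> u \<longrightarrow> (\<forall>x\<in>F u. res u v x \<in> F v)) \<and>
     (\<forall>u v w. w \<le> v \<longrightarrow> v \<le> u \<longrightarrow> (\<forall>x\<in>F u. res v w (res u v x) = res u w x))"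

definition is_sheaf :: "('o::complete_lattice \<Rightarrow> 'a set) \<Rightarrow> ('o \<Rightarrow> 'o \<Rightarrow> 'a \<Rightarrow> 'a) \<Rightarrow> bool" where
  "is_sheaf F res \<longleftrightarrow> is_presheaf F res \<and>
     (\<forall>U (s :: 'o \<Rightarrow> 'a).
        (\<forall>i\<in>U. s i \<in> F i) \<longrightarrow>
        (\<forall>i\<in>U. \<forall>j\<in>U. res i (inf i j) (s i) = res j (inf i j) (s j)) \<longrightarrow>
        (\<exists>!x. x \<in> F (Sup U) \<and> (\<forall>i\<in>U. res (Sup U) i x = s i)))"

definition is_posheaf ::
  "('o::complete_lattice \<Rightarrow> 'a set) \<Rightarrow> ('o \<Rightarrow> 'o \<Rightarrow> 'a \<Rightarrow> 'a) \<Rightarrow> ('o \<Rightarrow> 'a \<Rightarrow> 'a \<Rightarrow> bool) \<Rightarrow> bool" where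
  "is_posheaf F res le \<longleftrightarrow> is_sheaf F res \<and>
     (\<forall>u. ps_partial_order (le u) (F u)) \<and>
     (\<forall>u v. v \<le> u \<longrightarrow> (\<forall>x\<in>F u. \<forall>y\<in>F u. le u x y \<longrightarrow> le v (res u v x) (res u v y))) \<and>
     (\<forall>U. \<forall>s\<in>F (Sup U). \<forall>t\<in>F (Sup U).
        (\<forall>i\<in>U. le i (res (Sup U) i s) (res (Sup U) i t)) \<longrightarrow> le (Sup U) s t)"

definition has_left_adjoint :: "'a set \<Rightarrow> ('a \<Rightarrow> 'a \<Rightarrow> bool) \<Rightarrow> 'a set \<Rightarrow> ('a \<Rightarrow> 'a \<Rightarrow> bool) \<Rightarrow> ('a \<Rightarrow> 'a) \<Rightarrow> bool" where
  "has_left_adjoint A leA B leB f \<longleftrightarrow>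
     (\<exists>l. (\<forall>y\<in>B. l y \<in> A) \<and> (\<forall>x\<in>A. \<forall>y\<in>B. leA (l y) x \<longleftrightarrow> leB y (f x)))"

definition has_right_adjoint :: "'a set \<Rightarrow> ('a \<Rightarrow> 'a \<Rightarrow> bool) \<Rightarrow> 'a set \<Rightarrow> ('a \<Rightarrow> 'a \<Rightarrow> bool) \<Rightarrow> ('a \<Rightarrow> 'a) \<Rightarrow> bool" where
  "has_right_adjoint A leA B leB f \<longleftrightarrow>
     (\<exists>r. (\<forall>y\<in>B. r y \<in> A) \<and> (\<forall>x\<in>A. \<forall>y\<in>B. leB (f x) y \<longleftrightarrow> leA x (r y)))"

definition is_complete_posheaf ::
  "('o::complete_lattice \<Rightarrow> 'a set) \<Rightarrow> ('o \<Rightarrow> 'o \<Rightarrow> 'a \<Rightarrow> 'a) \<Rightarrow> ('o \<Rightarrow> 'a \<Rightarrow> 'a \<Rightarrow> bool) \<Rightarrow> bool" where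
  "is_complete_posheaf F res le \<longleftrightarrow> is_posheaf F res le \<and>
     (\<forall>u. ps_complete_lattice (le u) (F u)) \<and>
     (\<forall>u v. v \<le> u \<longrightarrow>
        res u v ` F u = F v \<and>
        has_left_adjoint (F u) (le u) (F v) (le v) (res u v) \<and>
        has_right_adjoint (F u) (le u) (F v) (le v) (res u v))"

(* S is a subsheaf of F^u (F restricted to the opens below u); S v = {} outside the down-set of u *)
definition is_subsheaf_below ::
  "('o::complete_lattice \<Rightarrow> 'a set) \<Rightarrow> ('o \<Rightarrow> 'o \<Rightarrow> 'a \<Rightarrow> 'a) \<Rightarrow> 'o \<Rightarrow> ('o \<Rightarrow> 'a set) \<Rightarrow> bool" where
  "is_subsheaf_below F res u S \<longleftrightarrow>
     (\<forall>v. \<not> v \<le> u \<longrightarrow> S v = {}) \<and>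
     (\<forall>v. v \<le> u \<longrightarrow> S v \<subseteq> F v) \<and>
     (\<forall>v w. w \<le> v \<longrightarrow> v \<le> u \<longrightarrow> (\<forall>x\<in>S v. res v w x \<in> S w)) \<and>
     (\<forall>V. Sup V \<le> u \<longrightarrow> (\<forall>x\<in>F (Sup V). (\<forall>i\<in>V. res (Sup V) i x \<in> S i) \<longrightarrow> x \<in> S (Sup V)))"

definition PF :: "('o::complete_lattice \<Rightarrow> 'a set) \<Rightarrow> ('o \<Rightarrow> 'o \<Rightarrow> 'a \<Rightarrow> 'a) \<Rightarrow> 'o \<Rightarrow> ('o \<Rightarrow> 'a set) set" where
  "PF F res u = {S. is_subsheaf_below F res u S}"

definition gen_subsheaf ::
  "('o::complete_lattice \<Rightarrow> 'a set) \<Rightarrow> ('o \<Rightarrow> 'o \<Rightarrow> 'a \<Rightarrow> 'a) \<Rightarrow> 'o \<Rightarrow> ('o \<Rightarrow> 'a set) \<Rightarrow> ('o \<Rightarrow> 'a set)" where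
  "gen_subsheaf F res u T = (\<lambda>v. \<Inter>{S v | S. S \<in> PF F res u \<and> (\<forall>w. w \<le> u \<longrightarrow> T w \<subseteq> S w)})"

definition sup_F ::
  "('o::complete_lattice \<Rightarrow> 'a set) \<Rightarrow> ('o \<Rightarrow> 'o \<Rightarrow> 'a \<Rightarrow> 'a) \<Rightarrow> ('o \<Rightarrow> 'a \<Rightarrow> 'a \<Rightarrow> bool) \<Rightarrow> 'o \<Rightarrow> ('o \<Rightarrow> 'a set) \<Rightarrow> 'a" where
  "sup_F F res le u S = ps_least (le u) (F u) (\<lambda>z. \<forall>v. v \<le> u \<longrightarrow> (\<forall>y\<in>S v. le v y (res u v z)))"

definition m_F :: "('o \<Rightarrow> 'a set) \<Rightarrow> ('o \<Rightarrow> 'a \<Rightarrow> 'a \<Rightarrow> bool) \<Rightarrow> 'o \<Rightarrow> 'a \<Rightarrow> 'a \<Rightarrow> 'a" where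
  "m_F F le u x y = ps_meet (le u) (F u) x y"

definition mu_F ::
  "('o::complete_lattice \<Rightarrow> 'a set) \<Rightarrow> ('o \<Rightarrow> 'o \<Rightarrow> 'a \<Rightarrow> 'a) \<Rightarrow> ('o \<Rightarrow> 'a \<Rightarrow> 'a \<Rightarrow> bool) \<Rightarrow> 'o \<Rightarrow> 'a \<Rightarrow> ('o \<Rightarrow> 'a set) \<Rightarrow> ('o \<Rightarrow> 'a set)" where
  "mu_F F res le u x S = gen_subsheaf F res u
     (\<lambda>v. if v \<le> u then {m_F F le v (res u v x) y | y. y \<in> S v} else {})"

(* complete Heyting sheaf: sup_F o mu_F = m_F o (1_F x sup_F) as morphisms F x PF -> F,
   i.e. at every stage u *)
definition is_complete_heyting_sheaf ::
  "('o::complete_lattice \<Rightarrow> 'a set) \<Rightarrow> ('o \<Rightarrow> 'o \<Rightarrow> 'a \<Rightarrow> 'a) \<Rightarrow> ('o \<Rightarrow> 'a \<Rightarrow> 'a \<Rightarrow> bool) \<Rightarrow> bool" where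
  "is_complete_heyting_sheaf F res le \<longleftrightarrow>
     (\<forall>u. \<forall>x\<in>F u. \<forall>S\<in>PF F res u.
        sup_F F res le u (mu_F F res le u x S) = m_F F le u x (sup_F F res le u S))"

definition l_adj ::
  "('o::complete_lattice \<Rightarrow> 'a set) \<Rightarrow> ('o \<Rightarrow> 'o \<Rightarrow> 'a \<Rightarrow> 'a) \<Rightarrow> ('o \<Rightarrow> 'a \<Rightarrow> 'a \<Rightarrow> bool) \<Rightarrow> 'o \<Rightarrow> 'o \<Rightarrow> 'a \<Rightarrow> 'a" where
  "l_adj F res le v u y = ps_least (le u) (F u) (\<lambda>x. le v y (res u v x))"

end

theory Submission
  imports Defs
begin

lemma po_refl: "ps_partial_order le A \<Longrightarrow> x \<in> A \<Longrightarrow> le x x"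
  unfolding ps_partial_order_def by blast
lemma po_antisym: "ps_partial_order le A \<Longrightarrow> x \<in> A \<Longrightarrow> y \<in> A \<Longrightarrow> le x y \<Longrightarrow> le y x \<Longrightarrow> x = y"
  unfolding ps_partial_order_def by blast
lemma po_trans: "ps_partial_order le A \<Longrightarrow> x \<in> A \<Longrightarrow> y \<in> A \<Longrightarrow> z \<in> A \<Longrightarrow> le x y \<Longrightarrow> le y z \<Longrightarrow> le x z"
  unfolding ps_partial_order_def by blast

lemma ps_least_eq:
  assumes "ps_partial_order le A" "z \<in> A" "P z" "\<forall>w\<in>A. P w \<longrightarrow> le z w"
  shows "ps_least le A P = z"
  unfolding ps_least_def
proof (rule the_equality)
  show "z \<in> A \<and> P z \<and> (\<forall>w\<in>A. P w \<longrightarrow> le z w)" using assms by blast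
  fix z' assume "z' \<in> A \<and> P z' \<and> (\<forall>w\<in>A. P w \<longrightarrow> le z' w)"
  then show "z' = z" using assms po_antisym by metis
qed

lemma ps_least_cong:
  assumes "\<And>z. z \<in> A \<Longrightarrow> P z \<longleftrightarrow> Q z"
  shows "ps_least le A P = ps_least le A Q"
proof -
  have "(\<lambda>z. z \<in> A \<and> P z \<and> (\<forall>w\<in>A. P w \<longrightarrow> le z w)) = (\<lambda>z. z \<in> A \<and> Q z \<and> (\<forall>w\<in>A. Q w \<longrightarrow> le z w))"
    using assms by blast
  then show ?thesis unfolding ps_least_def by simp
qed

lemma join_props:
  assumes "ps_complete_lattice le A" "S \<subseteq> A"
  shows "ps_join le A S \<in> A" "\<And>s. s \<in> S \<Longrightarrow> le s (ps_join le A S)"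
    "\<And>w. w \<in> A \<Longrightarrow> (\<forall>s\<in>S. le s w) \<Longrightarrow> le (ps_join le A S) w"
proof -
  obtain z where z: "ps_is_lub le A S z" using assms unfolding ps_complete_lattice_def by blast
  have po: "ps_partial_order le A" using assms(1) unfolding ps_complete_lattice_def by blast
  have e: "ps_join le A S = z" unfolding ps_join_def
    by (rule ps_least_eq[OF po]) (use z in \<open>auto simp: ps_is_lub_def\<close>)
  show "ps_join le A S \<in> A" "\<And>s. s \<in> S \<Longrightarrow> le s (ps_join le A S)"
    "\<And>w. w \<in> A \<Longrightarrow> (\<forall>s\<in>S. le s w) \<Longrightarrow> le (ps_join le A S) w"
    using z e unfolding ps_is_lub_def by auto
qed

lemma meet_props:
  assumes "ps_complete_lattice le A" "x \<in> A" "y \<in> A"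
  shows "ps_meet le A x y \<in> A \<and> le (ps_meet le A x y) x \<and> le (ps_meet le A x y) y \<and>
     (\<forall>w\<in>A. le w x \<and> le w y \<longrightarrow> le w (ps_meet le A x y))"
proof -
  have po: "ps_partial_order le A" using assms(1) unfolding ps_complete_lattice_def by blast
  define L where "L = {w\<in>A. le w x \<and> le w y}"
  define m where "m = ps_join le A L"
  have L: "L \<subseteq> A" unfolding L_def by blast
  note J = join_props[OF assms(1) L]
  have P: "m \<in> A \<and> le m x \<and> le m y \<and> (\<forall>w\<in>A. le w x \<and> le w y \<longrightarrow> le w m)"
    using J assms unfolding m_def L_def by auto
  have "ps_meet le A x y = m" unfolding ps_meet_def
  proof (rule the_equality)
    show "m \<in> A \<and> le m x \<and> le m y \<and> (\<forall>w\<in>A. le w x \<and> le w y \<longrightarrow> le w m)" by (rule P)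
    fix z assume "z \<in> A \<and> le z x \<and> le z y \<and> (\<forall>w\<in>A. le w x \<and> le w y \<longrightarrow> le w z)"
    then show "z = m" using P po_antisym[OF po] by metis
  qed
  then show ?thesis using P by simp
qed

locale cps =
  fixes F :: "'o::complete_lattice \<Rightarrow> 'a set"
    and res :: "'o \<Rightarrow> 'o \<Rightarrow> 'a \<Rightarrow> 'a"
    and le :: "'o \<Rightarrow> 'a \<Rightarrow> 'a \<Rightarrow> bool"
  assumes complete: "is_complete_posheaf F res le"
begin

lemma C1: "is_posheaf F res le" using complete unfolding is_complete_posheaf_def by (rule conjunct1)
lemma C2: "ps_complete_lattice (le u) (F u)"
  using complete unfolding is_complete_posheaf_def by (elim conjE) (erule allE)
lemma C3: "v \<le> u \<Longrightarrow> has_left_adjoint (F u) (le u) (F v) (le v) (res u v)"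
  using complete unfolding is_complete_posheaf_def by blast
lemma P1: "is_sheaf F res" using C1 unfolding is_posheaf_def by (rule conjunct1)
lemma po: "ps_partial_order (le u) (F u)"
  using C1 unfolding is_posheaf_def by (elim conjE) (erule allE)
lemma cl: "ps_complete_lattice (le u) (F u)" by (rule C2)
lemma presheaf: "is_presheaf F res"
  using P1 unfolding is_sheaf_def by (rule conjunct1)
lemma res_in: "v \<le> u \<Longrightarrow> x \<in> F u \<Longrightarrow> res u v x \<in> F v"
  using presheaf unfolding is_presheaf_def by blast
lemma res_id: "x \<in> F u \<Longrightarrow> res u u x = x"
  using presheaf unfolding is_presheaf_def by simp
lemma res_comp: "w \<le> v \<Longrightarrow> v \<le> u \<Longrightarrow> x \<in> F u \<Longrightarrow> res v w (res u v x) = res u w x"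
  using presheaf unfolding is_presheaf_def by blast
lemma P3: "\<forall>u v. v \<le> u \<longrightarrow> (\<forall>x\<in>F u. \<forall>y\<in>F u. le u x y \<longrightarrow> le v (res u v x) (res u v y))"
  using C1 unfolding is_posheaf_def by (elim conjE)
lemma P4: "\<forall>U. \<forall>s\<in>F (Sup U). \<forall>t\<in>F (Sup U).
        (\<forall>i\<in>U. le i (res (Sup U) i s) (res (Sup U) i t)) \<longrightarrow> le (Sup U) s t"
  using C1 unfolding is_posheaf_def by (elim conjE)
lemma res_mono: "v \<le> u \<Longrightarrow> x \<in> F u \<Longrightarrow> y \<in> F u \<Longrightarrow> le u x y \<Longrightarrow> le v (res u v x) (res u v y)"
  using P3 by blast
lemma pos3: "s \<in> F (Sup U) \<Longrightarrow> t \<in> F (Sup U) \<Longrightarrow> (\<forall>i\<in>U. le i (res (Sup U) i s) (res (Sup U) i t)) \<Longrightarrow> le (Sup U) s t"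
  using P4 by blast

lemma refl: "x \<in> F u \<Longrightarrow> le u x x" using po_refl[OF po] .
lemma antisym: "x \<in> F u \<Longrightarrow> y \<in> F u \<Longrightarrow> le u x y \<Longrightarrow> le u y x \<Longrightarrow> x = y" using po_antisym[OF po] .
lemma trans: "x \<in> F u \<Longrightarrow> y \<in> F u \<Longrightarrow> z \<in> F u \<Longrightarrow> le u x y \<Longrightarrow> le u y z \<Longrightarrow> le u x z" using po_trans[OF po] .

lemma meet: "x \<in> F u \<Longrightarrow> y \<in> F u \<Longrightarrow>
   m_F F le u x y \<in> F u \<and> le u (m_F F le u x y) x \<and> le u (m_F F le u x y) y \<and>
     (\<forall>w\<in>F u. le u w x \<and> le u w y \<longrightarrow> le u w (m_F F le u x y))"
  unfolding m_F_def using meet_props[OF cl] by blast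

lemma meet_in: "x \<in> F u \<Longrightarrow> y \<in> F u \<Longrightarrow> m_F F le u x y \<in> F u" using meet by blast

lemma meet_eq: "x \<in> F u \<Longrightarrow> y \<in> F u \<Longrightarrow> m \<in> F u \<Longrightarrow> le u m x \<Longrightarrow> le u m y \<Longrightarrow>
   (\<forall>w\<in>F u. le u w x \<and> le u w y \<longrightarrow> le u w m) \<Longrightarrow> m_F F le u x y = m"
proof -
  assume h: "x \<in> F u" "y \<in> F u" "m \<in> F u" "le u m x" "le u m y" "\<forall>w\<in>F u. le u w x \<and> le u w y \<longrightarrow> le u w m"
  note M = meet[OF h(1,2)]
  have 1: "le u m (m_F F le u x y)" using M h by blast
  have 2: "le u (m_F F le u x y) m" using M h by blast
  show ?thesis using antisym[OF _ h(3) 2 1] M by blast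
qed

lemma ladj:
  assumes "v \<le> u" "y \<in> F v"
  shows "l_adj F res le v u y \<in> F u" "\<And>x. x \<in> F u \<Longrightarrow> le u (l_adj F res le v u y) x \<longleftrightarrow> le v y (res u v x)"
proof -
  obtain l where l1: "\<forall>y\<in>F v. l y \<in> F u" and l2: "\<forall>x\<in>F u. \<forall>y\<in>F v. le u (l y) x \<longleftrightarrow> le v y (res u v x)"
    using C3[OF assms(1)] unfolding has_left_adjoint_def by blast
  have ly: "l y \<in> F u" using l1 assms by blast
  have iff: "\<And>x. x \<in> F u \<Longrightarrow> le u (l y) x \<longleftrightarrow> le v y (res u v x)" using l2 assms(2) by blast
  have "l_adj F res le v u y = l y" unfolding l_adj_def
  proof (rule ps_least_eq[OF po])
    show "l y \<in> F u" by (rule ly)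
    show "le v y (res u v (l y))" using iff[OF ly] refl[OF ly] by simp
    show "\<forall>w\<in>F u. le v y (res u v w) \<longrightarrow> le u (l y) w" using iff by simp
  qed
  then show "l_adj F res le v u y \<in> F u" "\<And>x. x \<in> F u \<Longrightarrow> le u (l_adj F res le v u y) x \<longleftrightarrow> le v y (res u v x)"
    using ly iff by simp_all
qed

lemma res_meet:
  assumes wv: "w \<le> v" and a: "a \<in> F v" and b: "b \<in> F v"
  shows "res v w (m_F F le v a b) = m_F F le w (res v w a) (res v w b)"
proof -
  note M = meet[OF a b]
  have min: "m_F F le v a b \<in> F v" using M by blast
  have ra: "res v w a \<in> F w" and rb: "res v w b \<in> F w" using res_in wv a b by auto
  have rm: "res v w (m_F F le v a b) \<in> F w" using res_in[OF wv min] .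
  define c where "c = m_F F le w (res v w a) (res v w b)"
  note C = meet[OF ra rb, folded c_def]
  have cin: "c \<in> F w" using C by blast
  have l: "l_adj F res le w v c \<in> F v" using ladj(1)[OF wv cin] .
  have "le v (l_adj F res le w v c) a" using ladj(2)[OF wv cin a] C by simp
  moreover have "le v (l_adj F res le w v c) b" using ladj(2)[OF wv cin b] C by simp
  ultimately have "le v (l_adj F res le w v c) (m_F F le v a b)" using M l by blast
  then have 1: "le w c (res v w (m_F F le v a b))" using ladj(2)[OF wv cin min] by simp
  have "le w (res v w (m_F F le v a b)) (res v w a)" using res_mono[OF wv min a] M by blast
  moreover have "le w (res v w (m_F F le v a b)) (res v w b)" using res_mono[OF wv min b] M by blast
  ultimately have 2: "le w (res v w (m_F F le v a b)) c" using C rm by blast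
  have "res v w (m_F F le v a b) = c" using antisym[OF rm cin 2 1] .
  then show ?thesis unfolding c_def .
qed

lemma gen_mem: "a \<in> gen_subsheaf F res u T v \<longleftrightarrow> (\<forall>S. S \<in> PF F res u \<and> (\<forall>w. w \<le> u \<longrightarrow> T w \<subseteq> S w) \<longrightarrow> a \<in> S v)"
  unfolding gen_subsheaf_def by auto

lemma gen_le:
  assumes "D \<in> PF F res u"
  shows "(\<forall>w. w \<le> u \<longrightarrow> gen_subsheaf F res u T w \<subseteq> D w) \<longleftrightarrow> (\<forall>w. w \<le> u \<longrightarrow> T w \<subseteq> D w)"
proof
  assume h: "\<forall>w. w \<le> u \<longrightarrow> gen_subsheaf F res u T w \<subseteq> D w"
  have "T w \<subseteq> gen_subsheaf F res u T w" if "w \<le> u" for w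
  proof
    fix a assume "a \<in> T w" then show "a \<in> gen_subsheaf F res u T w"
      using that unfolding gen_mem by blast
  qed
  then show "\<forall>w. w \<le> u \<longrightarrow> T w \<subseteq> D w" using h by blast
next
  assume h: "\<forall>w. w \<le> u \<longrightarrow> T w \<subseteq> D w"
  show "\<forall>w. w \<le> u \<longrightarrow> gen_subsheaf F res u T w \<subseteq> D w"
  proof (intro allI impI subsetI)
    fix w a assume "w \<le> u" "a \<in> gen_subsheaf F res u T w"
    then have "\<forall>S. S \<in> PF F res u \<and> (\<forall>w. w \<le> u \<longrightarrow> T w \<subseteq> S w) \<longrightarrow> a \<in> S w"
      unfolding gen_mem by blast
    then show "a \<in> D w" using assms h by blast
  qed
qed

lemma top_PF: "(\<lambda>w. if w \<le> u then F w else {}) \<in> PF F res u"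
  unfolding PF_def mem_Collect_eq is_subsheaf_below_def
proof (intro conjI allI impI ballI)
  fix v w x assume "w \<le> v" "v \<le> u" "x \<in> (if v \<le> u then F v else {})"
  then show "res v w x \<in> (if w \<le> u then F w else {})" using res_in order_trans[of w v u] by auto
qed auto

lemma gen_PF:
  assumes "\<forall>w. w \<le> u \<longrightarrow> T w \<subseteq> F w"
  shows "gen_subsheaf F res u T \<in> PF F res u"
proof -
  let ?G = "gen_subsheaf F res u T"
  let ?Ft = "\<lambda>w. if w \<le> u then F w else {}"
  have Ft: "?Ft \<in> PF F res u" "\<forall>w. w \<le> u \<longrightarrow> T w \<subseteq> ?Ft w" using top_PF assms by auto
  have sub: "?G v \<subseteq> ?Ft v" for v
  proof
    fix a assume "a \<in> ?G v" then show "a \<in> ?Ft v" using Ft unfolding gen_mem by blast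
  qed
  show ?thesis unfolding PF_def mem_Collect_eq is_subsheaf_below_def
  proof (intro conjI allI impI ballI)
    fix v assume "\<not> v \<le> u" then show "?G v = {}" using sub[of v] by auto
  next
    fix v assume "v \<le> u" then show "?G v \<subseteq> F v" using sub[of v] by auto
  next
    fix v w x assume h: "w \<le> v" "v \<le> u" "x \<in> ?G v"
    show "res v w x \<in> ?G w" unfolding gen_mem
    proof (intro allI impI)
      fix S assume S: "S \<in> PF F res u \<and> (\<forall>w. w \<le> u \<longrightarrow> T w \<subseteq> S w)"
      then have "x \<in> S v" using h gen_mem by blast
      then show "res v w x \<in> S w" using S h unfolding PF_def is_subsheaf_below_def by blast
    qed
  next
    fix V x assume h: "Sup V \<le> u" "x \<in> F (Sup V)" "\<forall>i\<in>V. res (Sup V) i x \<in> ?G i"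
    show "x \<in> ?G (Sup V)" unfolding gen_mem
    proof (intro allI impI)
      fix S assume S: "S \<in> PF F res u \<and> (\<forall>w. w \<le> u \<longrightarrow> T w \<subseteq> S w)"
      then have "\<forall>i\<in>V. res (Sup V) i x \<in> S i" using h gen_mem by blast
      then show "x \<in> S (Sup V)" using S h unfolding PF_def is_subsheaf_below_def by blast
    qed
  qed
qed

definition Dz where "Dz u x z = (\<lambda>w. if w \<le> u then {s \<in> F w. le w (m_F F le w (res u w x) s) (res u w z)} else {})"
definition Dy where "Dy u z = (\<lambda>w. if w \<le> u then {s \<in> F w. le w s (res u w z)} else {})"

lemma Dy_PF:
  assumes z: "z \<in> F u"
  shows "Dy u z \<in> PF F res u"
  unfolding PF_def mem_Collect_eq is_subsheaf_below_def
proof (intro conjI allI impI ballI)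
  fix v assume "\<not> v \<le> u" then show "Dy u z v = {}" unfolding Dy_def by auto
next
  fix v assume "v \<le> u" then show "Dy u z v \<subseteq> F v" unfolding Dy_def by auto
next
  fix v w x assume h: "w \<le> v" "v \<le> u" "x \<in> Dy u z v"
  then have x: "x \<in> F v" "le v x (res u v z)" unfolding Dy_def by auto
  have "le w (res v w x) (res v w (res u v z))" using res_mono h x res_in z by blast
  then show "res v w x \<in> Dy u z w" using h x res_comp z res_in unfolding Dy_def
    by (auto intro: order_trans)
next
  fix V x assume h: "Sup V \<le> u" "x \<in> F (Sup V)" "\<forall>i\<in>V. res (Sup V) i x \<in> Dy u z i"
  have iV: "i \<in> V \<Longrightarrow> i \<le> Sup V" for i by (simp add: Sup_upper)
  have "le (Sup V) x (res u (Sup V) z)"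
  proof (rule pos3)
    show "x \<in> F (Sup V)" by fact
    show "res u (Sup V) z \<in> F (Sup V)" using res_in h z by blast
    show "\<forall>i\<in>V. le i (res (Sup V) i x) (res (Sup V) i (res u (Sup V) z))"
    proof
      fix i assume i: "i \<in> V"
      then have "i \<le> u" using iV h order_trans by blast
      then show "le i (res (Sup V) i x) (res (Sup V) i (res u (Sup V) z))"
        using h(3) i res_comp[OF iV[OF i] h(1) z] unfolding Dy_def by auto
    qed
  qed
  then show "x \<in> Dy u z (Sup V)" using h unfolding Dy_def by auto
qed

lemma Dz_PF:
  assumes x: "x \<in> F u" and z: "z \<in> F u"
  shows "Dz u x z \<in> PF F res u"
  unfolding PF_def mem_Collect_eq is_subsheaf_below_def
proof (intro conjI allI impI ballI)
  fix v assume "\<not> v \<le> u" then show "Dz u x z v = {}" unfolding Dz_def by auto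
next
  fix v assume "v \<le> u" then show "Dz u x z v \<subseteq> F v" unfolding Dz_def by auto
next
  fix v w s assume h: "w \<le> v" "v \<le> u" "s \<in> Dz u x z v"
  then have s: "s \<in> F v" "le v (m_F F le v (res u v x) s) (res u v z)" unfolding Dz_def by auto
  have rx: "res u v x \<in> F v" using res_in h x by blast
  have "le w (res v w (m_F F le v (res u v x) s)) (res v w (res u v z))"
    using res_mono h s res_in z meet_in rx by blast
  moreover have "res v w (m_F F le v (res u v x) s) = m_F F le w (res u w x) (res v w s)"
    using res_meet[OF h(1) rx s(1)] res_comp[OF h(1,2) x] by simp
  ultimately have "le w (m_F F le w (res u w x) (res v w s)) (res u w z)"
    using res_comp[OF h(1,2) z] by simp
  moreover have "res v w s \<in> F w" using res_in h(1) s(1) by blast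
  moreover have "w \<le> u" using h order_trans by blast
  ultimately show "res v w s \<in> Dz u x z w" unfolding Dz_def by simp
next
  fix V s assume h: "Sup V \<le> u" "s \<in> F (Sup V)" "\<forall>i\<in>V. res (Sup V) i s \<in> Dz u x z i"
  have iV: "i \<in> V \<Longrightarrow> i \<le> Sup V" for i by (simp add: Sup_upper)
  have rx: "res u (Sup V) x \<in> F (Sup V)" using res_in h x by blast
  have "le (Sup V) (m_F F le (Sup V) (res u (Sup V) x) s) (res u (Sup V) z)"
  proof (rule pos3)
    show "m_F F le (Sup V) (res u (Sup V) x) s \<in> F (Sup V)" using meet_in rx h by blast
    show "res u (Sup V) z \<in> F (Sup V)" using res_in h z by blast
    show "\<forall>i\<in>V. le i (res (Sup V) i (m_F F le (Sup V) (res u (Sup V) x) s)) (res (Sup V) i (res u (Sup V) z))"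
    proof
      fix i assume i: "i \<in> V"
      then have "i \<le> u" using iV h order_trans by blast
      moreover have "res (Sup V) i (m_F F le (Sup V) (res u (Sup V) x) s) = m_F F le i (res u i x) (res (Sup V) i s)"
        using res_meet[OF iV[OF i] rx h(2)] res_comp[OF iV[OF i] h(1) x] by simp
      ultimately show "le i (res (Sup V) i (m_F F le (Sup V) (res u (Sup V) x) s)) (res (Sup V) i (res u (Sup V) z))"
        using h(3) i res_comp[OF iV[OF i] h(1) z] unfolding Dz_def by auto
    qed
  qed
  then show "s \<in> Dz u x z (Sup V)" using h unfolding Dz_def by auto
qed

lemma PF_sub: "S \<in> PF F res u \<Longrightarrow> w \<le> u \<Longrightarrow> S w \<subseteq> F w"
  unfolding PF_def is_subsheaf_below_def by blast

lemma sup_gen: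
  assumes T: "\<forall>w. w \<le> u \<longrightarrow> T w \<subseteq> F w"
  shows "sup_F F res le u (gen_subsheaf F res u T) = ps_least (le u) (F u) (\<lambda>z. \<forall>w. w \<le> u \<longrightarrow> (\<forall>y\<in>T w. le w y (res u w z)))"
  unfolding sup_F_def
proof (rule ps_least_cong)
  fix z assume z: "z \<in> F u"
  have G: "gen_subsheaf F res u T \<in> PF F res u" using gen_PF T by blast
  have "(\<forall>w. w \<le> u \<longrightarrow> (\<forall>y\<in>gen_subsheaf F res u T w. le w y (res u w z)))
     \<longleftrightarrow> (\<forall>w. w \<le> u \<longrightarrow> gen_subsheaf F res u T w \<subseteq> Dy u z w)"
    using PF_sub[OF G] unfolding Dy_def by auto
  also have "\<dots> \<longleftrightarrow> (\<forall>w. w \<le> u \<longrightarrow> T w \<subseteq> Dy u z w)" using gen_le[OF Dy_PF[OF z]] .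
  also have "\<dots> \<longleftrightarrow> (\<forall>w. w \<le> u \<longrightarrow> (\<forall>y\<in>T w. le w y (res u w z)))"
    using T unfolding Dy_def by auto
  finally show "(\<forall>w. w \<le> u \<longrightarrow> (\<forall>y\<in>gen_subsheaf F res u T w. le w y (res u w z)))
     \<longleftrightarrow> (\<forall>w. w \<le> u \<longrightarrow> (\<forall>y\<in>T w. le w y (res u w z)))" .
qed

lemma sup_mu:
  assumes x: "x \<in> F u" and S: "S \<in> PF F res u"
  shows "sup_F F res le u (mu_F F res le u x S) = ps_least (le u) (F u)
     (\<lambda>z. \<forall>w. w \<le> u \<longrightarrow> (\<forall>s\<in>S w. le w (m_F F le w (res u w x) s) (res u w z)))"
proof -
  let ?T = "\<lambda>v. if v \<le> u then {m_F F le v (res u v x) y | y. y \<in> S v} else {}"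
  have T: "\<forall>w. w \<le> u \<longrightarrow> ?T w \<subseteq> F w"
  proof (intro allI impI subsetI)
    fix w a assume w: "w \<le> u" and "a \<in> ?T w"
    then obtain y where y: "y \<in> S w" "a = m_F F le w (res u w x) y" by auto
    have "y \<in> F w" using PF_sub[OF S w] y by blast
    moreover have "res u w x \<in> F w" using res_in[OF w x] .
    ultimately show "a \<in> F w" using y meet_in by simp
  qed
  show ?thesis unfolding mu_F_def sup_gen[OF T]
    by (rule ps_least_cong) auto
qed

lemma gen_forall:
  assumes T: "\<forall>w. w \<le> u \<longrightarrow> T w \<subseteq> F w" and x: "x \<in> F u" and z: "z \<in> F u"
  shows "(\<forall>w. w \<le> u \<longrightarrow> (\<forall>s\<in>gen_subsheaf F res u T w. le w (m_F F le w (res u w x) s) (res u w z)))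
     \<longleftrightarrow> (\<forall>w. w \<le> u \<longrightarrow> (\<forall>s\<in>T w. le w (m_F F le w (res u w x) s) (res u w z)))"
proof -
  have G: "gen_subsheaf F res u T \<in> PF F res u" using gen_PF T by blast
  have "(\<forall>w. w \<le> u \<longrightarrow> (\<forall>s\<in>gen_subsheaf F res u T w. le w (m_F F le w (res u w x) s) (res u w z)))
     \<longleftrightarrow> (\<forall>w. w \<le> u \<longrightarrow> gen_subsheaf F res u T w \<subseteq> Dz u x z w)"
    using PF_sub[OF G] unfolding Dz_def by auto
  also have "\<dots> \<longleftrightarrow> (\<forall>w. w \<le> u \<longrightarrow> T w \<subseteq> Dz u x z w)" using gen_le[OF Dz_PF[OF x z]] .
  also have "\<dots> \<longleftrightarrow> (\<forall>w. w \<le> u \<longrightarrow> (\<forall>s\<in>T w. le w (m_F F le w (res u w x) s) (res u w z)))"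
    using T unfolding Dz_def by auto
  finally show ?thesis .
qed


lemma sup_single:
  assumes vu: "v \<le> u" and y: "y \<in> F v"
  shows "sup_F F res le u (gen_subsheaf F res u (\<lambda>w. if w = v then {y} else {})) = l_adj F res le v u y"
proof -
  have T: "\<forall>w. w \<le> u \<longrightarrow> (\<lambda>w. if w = v then {y} else {}) w \<subseteq> F w" using y by auto
  show ?thesis unfolding sup_gen[OF T] l_adj_def
    by (rule ps_least_cong) (use vu in auto)
qed

lemma sup_mu_single:
  assumes vu: "v \<le> u" and y: "y \<in> F v" and x: "x \<in> F u"
  shows "sup_F F res le u (mu_F F res le u x (gen_subsheaf F res u (\<lambda>w. if w = v then {y} else {})))
     = l_adj F res le v u (m_F F le v (res u v x) y)"
proof -
  let ?T = "(\<lambda>w. if w = v then {y} else {})"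
  have T: "\<forall>w. w \<le> u \<longrightarrow> ?T w \<subseteq> F w" using y by auto
  have G: "gen_subsheaf F res u ?T \<in> PF F res u" using gen_PF[OF T] .
  show ?thesis unfolding sup_mu[OF x G] l_adj_def
  proof (rule ps_least_cong)
    fix z assume z: "z \<in> F u"
    show "(\<forall>w. w \<le> u \<longrightarrow> (\<forall>s\<in>gen_subsheaf F res u ?T w. le w (m_F F le w (res u w x) s) (res u w z)))
      \<longleftrightarrow> le v (m_F F le v (res u v x) y) (res u v z)"
      unfolding gen_forall[OF T x z] using vu by auto
  qed
qed

lemma sup_setA:
  assumes A: "A \<subseteq> F u"
  shows "sup_F F res le u (gen_subsheaf F res u (\<lambda>w. if w = u then A else {})) = ps_join (le u) (F u) A"
proof -
  have T: "\<forall>w. w \<le> u \<longrightarrow> (\<lambda>w. if w = u then A else {}) w \<subseteq> F w" using A by auto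
  show ?thesis unfolding sup_gen[OF T] ps_join_def
    by (rule ps_least_cong) (auto simp: res_id)
qed

lemma sup_mu_setA:
  assumes A: "A \<subseteq> F u" and x: "x \<in> F u"
  shows "sup_F F res le u (mu_F F res le u x (gen_subsheaf F res u (\<lambda>w. if w = u then A else {})))
     = ps_join (le u) (F u) {m_F F le u x a | a. a \<in> A}"
proof -
  let ?T = "(\<lambda>w. if w = u then A else {})"
  have T: "\<forall>w. w \<le> u \<longrightarrow> ?T w \<subseteq> F w" using A by auto
  have G: "gen_subsheaf F res u ?T \<in> PF F res u" using gen_PF[OF T] .
  show ?thesis unfolding sup_mu[OF x G] ps_join_def
  proof (rule ps_least_cong)
    fix z assume z: "z \<in> F u"
    show "(\<forall>w. w \<le> u \<longrightarrow> (\<forall>s\<in>gen_subsheaf F res u ?T w. le w (m_F F le w (res u w x) s) (res u w z)))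
      \<longleftrightarrow> (\<forall>s\<in>{m_F F le u x a | a. a \<in> A}. le u s z)"
      unfolding gen_forall[OF T x z] using res_id[OF x] res_id[OF z] by auto
  qed
qed

lemma sup_B:
  assumes S: "S \<in> PF F res u"
  shows "sup_F F res le u S = ps_join (le u) (F u) {l_adj F res le w u s | w s. w \<le> u \<and> s \<in> S w}"
  unfolding sup_F_def ps_join_def
proof (rule ps_least_cong)
  fix z assume z: "z \<in> F u"
  show "(\<forall>v. v \<le> u \<longrightarrow> (\<forall>y\<in>S v. le v y (res u v z))) \<longleftrightarrow>
        (\<forall>b\<in>{l_adj F res le w u s | w s. w \<le> u \<and> s \<in> S w}. le u b z)"
  proof
    assume h: "\<forall>v. v \<le> u \<longrightarrow> (\<forall>y\<in>S v. le v y (res u v z))"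
    show "\<forall>b\<in>{l_adj F res le w u s | w s. w \<le> u \<and> s \<in> S w}. le u b z"
    proof
      fix b assume "b \<in> {l_adj F res le w u s | w s. w \<le> u \<and> s \<in> S w}"
      then obtain w s where ws: "w \<le> u" "s \<in> S w" "b = l_adj F res le w u s" by blast
      have "s \<in> F w" using PF_sub[OF S ws(1)] ws by blast
      then show "le u b z" using ladj(2)[OF ws(1) _ z] h ws by blast
    qed
  next
    assume h: "\<forall>b\<in>{l_adj F res le w u s | w s. w \<le> u \<and> s \<in> S w}. le u b z"
    show "\<forall>v. v \<le> u \<longrightarrow> (\<forall>y\<in>S v. le v y (res u v z))"
    proof (intro allI impI ballI)
      fix v y assume v: "v \<le> u" and yS: "y \<in> S v"
      have "y \<in> F v" using PF_sub[OF S v] yS by blast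
      moreover have "le u (l_adj F res le v u y) z" using h v yS by blast
      ultimately show "le v y (res u v z)" using ladj(2)[OF v _ z] by blast
    qed
  qed
qed

lemma sup_mu_B:
  assumes S: "S \<in> PF F res u" and x: "x \<in> F u"
    and frob: "\<forall>u v. v \<le> u \<longrightarrow> (\<forall>x\<in>F u. \<forall>y\<in>F v.
              m_F F le u x (l_adj F res le v u y) = l_adj F res le v u (m_F F le v (res u v x) y))"
  shows "sup_F F res le u (mu_F F res le u x S) =
    ps_join (le u) (F u) {m_F F le u x b | b. b \<in> {l_adj F res le w u s | w s. w \<le> u \<and> s \<in> S w}}"
  unfolding sup_mu[OF x S] ps_join_def
proof (rule ps_least_cong)
  fix z assume z: "z \<in> F u"
  have key: "le w (m_F F le w (res u w x) s) (res u w z) \<longleftrightarrow> le u (m_F F le u x (l_adj F res le w u s)) z"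
    if w: "w \<le> u" and s: "s \<in> S w" for w s
  proof -
    have sF: "s \<in> F w" using PF_sub[OF S w] s by blast
    have mF: "m_F F le w (res u w x) s \<in> F w" using meet_in res_in[OF w x] sF by blast
    have "m_F F le u x (l_adj F res le w u s) = l_adj F res le w u (m_F F le w (res u w x) s)"
      using frob w x sF by blast
    then show ?thesis using ladj(2)[OF w mF z] by simp
  qed
  show "(\<forall>w. w \<le> u \<longrightarrow> (\<forall>s\<in>S w. le w (m_F F le w (res u w x) s) (res u w z))) \<longleftrightarrow>
    (\<forall>c\<in>{m_F F le u x b | b. b \<in> {l_adj F res le w u s | w s. w \<le> u \<and> s \<in> S w}}. le u c z)"
    using key by blast
qed

lemma B_sub: "S \<in> PF F res u \<Longrightarrow> {l_adj F res le w u s | w s. w \<le> u \<and> s \<in> S w} \<subseteq> F u"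
  using ladj(1) PF_sub by blast

end

theorem proposition3p7:
  fixes F :: "'o::complete_lattice \<Rightarrow> 'a set"
    and res :: "'o \<Rightarrow> 'o \<Rightarrow> 'a \<Rightarrow> 'a"
    and le :: "'o \<Rightarrow> 'a \<Rightarrow> 'a \<Rightarrow> bool"
  assumes frame_opens: "\<And>(a::'o) B. inf a (Sup B) = (SUP b\<in>B. inf a b)"
    and complete: "is_complete_posheaf F res le"
  shows "is_complete_heyting_sheaf F res le \<longleftrightarrow>
         ((\<forall>u. ps_frame (le u) (F u)) \<and>
          (\<forall>u v. v \<le> u \<longrightarrow> (\<forall>x\<in>F u. \<forall>y\<in>F v.
              m_F F le u x (l_adj F res le v u y)
              = l_adj F res le v u (m_F F le v (res u v x) y))))"
proof -
  interpret cps F res le using complete by unfold_locales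
  show ?thesis
  proof
    assume H: "is_complete_heyting_sheaf F res le"
    have H': "\<And>u x S. x \<in> F u \<Longrightarrow> S \<in> PF F res u \<Longrightarrow>
        sup_F F res le u (mu_F F res le u x S) = m_F F le u x (sup_F F res le u S)"
      using H unfolding is_complete_heyting_sheaf_def by blast
    have fr: "ps_frame (le u) (F u)" for u
      unfolding ps_frame_def
    proof (intro conjI ballI allI impI)
      show "ps_complete_lattice (le u) (F u)" by (rule cl)
      fix x A assume x: "x \<in> F u" and A: "A \<subseteq> F u"
      let ?T = "(\<lambda>w. if w = u then A else {})"
      have T: "\<forall>w. w \<le> u \<longrightarrow> ?T w \<subseteq> F w" using A by auto
      have G: "gen_subsheaf F res u ?T \<in> PF F res u" using gen_PF[OF T] .
      have "ps_join (le u) (F u) {m_F F le u x a | a. a \<in> A} = m_F F le u x (ps_join (le u) (F u) A)"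
        using H'[OF x G] sup_mu_setA[OF A x] sup_setA[OF A] by simp
      then show "ps_meet (le u) (F u) x (ps_join (le u) (F u) A) =
          ps_join (le u) (F u) {ps_meet (le u) (F u) x s |s. s \<in> A}"
        unfolding m_F_def by simp
    qed
    have fb: "\<forall>u v. v \<le> u \<longrightarrow> (\<forall>x\<in>F u. \<forall>y\<in>F v.
              m_F F le u x (l_adj F res le v u y)
              = l_adj F res le v u (m_F F le v (res u v x) y))"
    proof (intro allI impI ballI)
      fix u v x y assume vu: "v \<le> u" and x: "x \<in> F u" and y: "y \<in> F v"
      let ?T = "(\<lambda>w. if w = v then {y} else {})"
      have T: "\<forall>w. w \<le> u \<longrightarrow> ?T w \<subseteq> F w" using y by auto
      have G: "gen_subsheaf F res u ?T \<in> PF F res u" using gen_PF[OF T] .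
      show "m_F F le u x (l_adj F res le v u y) = l_adj F res le v u (m_F F le v (res u v x) y)"
        using H'[OF x G] sup_mu_single[OF vu y x] sup_single[OF vu y] by simp
    qed
    show "(\<forall>u. ps_frame (le u) (F u)) \<and> (\<forall>u v. v \<le> u \<longrightarrow> (\<forall>x\<in>F u. \<forall>y\<in>F v.
              m_F F le u x (l_adj F res le v u y)
              = l_adj F res le v u (m_F F le v (res u v x) y)))"
      using fr fb by blast
  next
    assume H: "(\<forall>u. ps_frame (le u) (F u)) \<and> (\<forall>u v. v \<le> u \<longrightarrow> (\<forall>x\<in>F u. \<forall>y\<in>F v.
              m_F F le u x (l_adj F res le v u y)
              = l_adj F res le v u (m_F F le v (res u v x) y)))"
    show "is_complete_heyting_sheaf F res le"
      unfolding is_complete_heyting_sheaf_def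
    proof (intro allI ballI)
      fix u x S assume x: "x \<in> F u" and S: "S \<in> PF F res u"
      let ?B = "{l_adj F res le w u s | w s. w \<le> u \<and> s \<in> S w}"
      have fr: "ps_frame (le u) (F u)" using H by blast
      have "m_F F le u x (ps_join (le u) (F u) ?B) = ps_join (le u) (F u) {m_F F le u x b | b. b \<in> ?B}"
        using fr B_sub[OF S] x unfolding ps_frame_def m_F_def by blast
      then show "sup_F F res le u (mu_F F res le u x S) = m_F F le u x (sup_F F res le u S)"
        using sup_mu_B[OF S x] H sup_B[OF S] by simp
    qed
  qed
qed

end
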